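(* Let $U$ be a uniformly convex Banach space satisfying Opial's condition, and let $Q\subseteq U$ be a closed, convex, bounded set. Let $r>0$ and let $\{\beta_n\}_n$ be a sequence of positive real numbers with $\lim_{n\to\infty}\beta_n=1$. Suppose $T:Q\to Q$ satisfies: for all $p,q\in Q$ with $\|p-q\|<r$, $\|T^np-T^nq\|\leq\beta_n\|p-q\|$ for every $n\in\mathbb{N}$. Let $\{q_n\}_n$ be a sequence in $Q$ converging weakly to some $w$ with $q_n-Tq_n\to 0$. If the asymptotic radius of $\{q_n\}_n$ relative to $Q$ is less than $r$, then $w$ is a fixed point of $T$.
   Context: Opial's condition (as defined in the paper): for every sequence $\{x_n\}_n$ in $U$ converging weakly to $x\in U$ and every $p\in U$ with $p\neq x$, one has $\limsup_{n\to\infty}\|x_n-x\|\leq\limsup_{n\to\infty}\|x_n-p\|$. For a bounded sequence $\{x_n\}_n$ in $U$, its asymptotic radius relative to $Q$ is $\inf_{y\in Q}\limsup_{n\to\infty}\|x_n-y\|$. *)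

theory Defs
  imports "HOL-Analysis.Analysis"
begin

definition weakly_converges :: "(nat \<Rightarrow> 'a::real_normed_vector) \<Rightarrow> 'a \<Rightarrow> bool" where
  "weakly_converges x l \<longleftrightarrow>
     (\<forall>f :: 'a \<Rightarrow> real. bounded_linear f \<longrightarrow> (\<lambda>n. f (x n)) \<longlonglongrightarrow> f l)"

definition uniformly_convex_space :: "'a::real_normed_vector itself \<Rightarrow> bool" where
  "uniformly_convex_space _ \<longleftrightarrow>
     (\<forall>e>0. \<exists>d>0. \<forall>x y :: 'a. norm x \<le> 1 \<and> norm y \<le> 1 \<and> norm (x - y) \<ge> e
        \<longrightarrow> norm ((1/2) *\<^sub>R (x + y)) \<le> 1 - d)"

definition opial_condition :: "'a::real_normed_vector itself \<Rightarrow> bool" where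
  "opial_condition _ \<longleftrightarrow>
     (\<forall>(x :: nat \<Rightarrow> 'a) l p. weakly_converges x l \<and> p \<noteq> l \<longrightarrow>
        limsup (\<lambda>n. ereal (norm (x n - l))) \<le> limsup (\<lambda>n. ereal (norm (x n - p))))"

definition asymptotic_radius :: "(nat \<Rightarrow> 'a::real_normed_vector) \<Rightarrow> 'a set \<Rightarrow> ereal" where
  "asymptotic_radius x Q = (INF y\<in>Q. limsup (\<lambda>n. ereal (norm (x n - y))))"

end

theory Submission
  imports Defs
begin


lemma HB_dominated:
  fixes p :: "'a::real_vector \<Rightarrow> real"
  assumes sub: "\<And>x y. p (x + y) \<le> p x + p y"
      and hom: "\<And>x c. c > 0 \<Longrightarrow> p (c *\<^sub>R x) \<le> c * p x"
  shows "\<exists>F. linear F \<and> (\<forall>x. F x \<le> p x)"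
proof -
  have homeq: "p (c *\<^sub>R x) = c * p x" if "c > 0" for c x
  proof -
    have "p x = p ((1/c) *\<^sub>R (c *\<^sub>R x))" using that by simp
    also have "\<dots> \<le> (1/c) * p (c *\<^sub>R x)" using hom[of "1/c" "c *\<^sub>R x"] that by simp
    finally have "c * p x \<le> p (c *\<^sub>R x)" using that by (simp add: field_simps)
    with hom[OF that, of x] show ?thesis by linarith
  qed
  have p0: "p 0 = 0" using homeq[of 2 0] by simp
  define good where "good G \<longleftrightarrow> (0,0) \<in> G \<and> (\<forall>x t y s. (x,t)\<in>G \<longrightarrow> (y,s)\<in>G \<longrightarrow> (x+y,t+s)\<in>G)
      \<and> (\<forall>x t c. (x,t)\<in>G \<longrightarrow> (c *\<^sub>R x, c*t)\<in>G) \<and> (\<forall>x t. (x,t)\<in>G \<longrightarrow> t \<le> p x)" for G :: "('a \<times> real) set"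
  have "\<exists>M\<in>Collect good. \<forall>X\<in>Collect good. M \<subseteq> X \<longrightarrow> X = M"
  proof (rule subset_Zorn_nonempty)
    have "good {(0,0)}" unfolding good_def using p0 by auto
    then show "Collect good \<noteq> {}" by blast
  next
    fix C assume "C \<noteq> {}" "subset.chain (Collect good) C"
    then have chs: "C \<subseteq> Collect good" and chl: "\<And>X Y. X \<in> C \<Longrightarrow> Y \<in> C \<Longrightarrow> X \<subseteq> Y \<or> Y \<subseteq> X"
      by (auto simp: subset_chain_def)
    have gC: "good X" if "X \<in> C" for X using chs that by auto
    have "good (\<Union>C)" unfolding good_def
    proof (intro conjI allI impI)
      obtain X where "X \<in> C" using \<open>C \<noteq> {}\<close> by auto
      with gC[OF this] show "(0,0) \<in> \<Union>C" unfolding good_def by auto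
    next
      fix x t y s assume "(x,t) \<in> \<Union>C" "(y,s) \<in> \<Union>C"
      then obtain X Y where XY: "X \<in> C" "Y \<in> C" "(x,t) \<in> X" "(y,s) \<in> Y" by auto
      show "(x+y,t+s) \<in> \<Union>C"
      proof (cases "X \<subseteq> Y")
        case True
        then have "(x,t) \<in> Y" using XY by auto
        with gC[OF XY(2)] XY(4) have "(x+y,t+s) \<in> Y" unfolding good_def by auto
        then show ?thesis using XY by auto
      next
        case False
        then have "Y \<subseteq> X" using chl XY by auto
        then have "(y,s) \<in> X" using XY by auto
        with gC[OF XY(1)] XY(3) have "(x+y,t+s) \<in> X" unfolding good_def by auto
        then show ?thesis using XY by auto
      qed
    next
      fix x t c assume "(x,t) \<in> \<Union>C"
      then obtain X where X: "X \<in> C" "(x,t) \<in> X" by auto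
      with gC[OF X(1)] have "(c *\<^sub>R x, c*t) \<in> X" unfolding good_def by auto
      then show "(c *\<^sub>R x, c*t) \<in> \<Union>C" using X by auto
    next
      fix x t assume "(x,t) \<in> \<Union>C"
      then obtain X where X: "X \<in> C" "(x,t) \<in> X" by auto
      with gC[OF X(1)] show "t \<le> p x" unfolding good_def by auto
    qed
    then show "\<Union>C \<in> Collect good" by simp
  qed
  then obtain M where gM: "good M" and maxM: "\<And>X. good X \<Longrightarrow> M \<subseteq> X \<Longrightarrow> X = M" by blast
  have M0: "(0,0) \<in> M" and Madd: "\<And>x t y s. (x,t)\<in>M \<Longrightarrow> (y,s)\<in>M \<Longrightarrow> (x+y,t+s)\<in>M"
    and Msc: "\<And>x t c. (x,t)\<in>M \<Longrightarrow> (c *\<^sub>R x, c*t)\<in>M" and Mp: "\<And>x t. (x,t)\<in>M \<Longrightarrow> t \<le> p x"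
    using gM unfolding good_def by auto
  have tot: "\<exists>t. (x,t) \<in> M" for x
  proof (rule ccontr)
    assume nx: "\<not> (\<exists>t. (x,t) \<in> M)"
    have key: "t1 - p (y1 - x) \<le> p (y2 + x) - t2" if "(y1,t1)\<in>M" "(y2,t2)\<in>M" for y1 t1 y2 t2
    proof -
      have "t1 + t2 \<le> p (y1 + y2)" using Mp[OF Madd[OF that]] .
      also have "\<dots> = p ((y1 - x) + (y2 + x))" by (simp add: algebra_simps)
      also have "\<dots> \<le> p (y1 - x) + p (y2 + x)" by (rule sub)
      finally show ?thesis by linarith
    qed
    define S where "S = {t - p (y - x) | y t. (y,t) \<in> M}"
    define c where "c = Sup S"
    have Sne: "S \<noteq> {}" using M0 unfolding S_def by blast
    have Sbdd: "bdd_above S" unfolding S_def bdd_above_def using key[OF _ M0] by auto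
    have c1: "t - p (y - x) \<le> c" if "(y,t)\<in>M" for y t
      unfolding c_def by (rule cSup_upper[OF _ Sbdd]) (use that S_def in auto)
    have c2: "c \<le> p (y + x) - t" if "(y,t)\<in>M" for y t
      unfolding c_def by (rule cSup_least[OF Sne]) (use that key S_def in auto)
    define M' where "M' = {(y + s *\<^sub>R x, t + s*c) | y t s. (y,t) \<in> M}"
    have "good M'" unfolding good_def
    proof (intro conjI allI impI)
      show "(0,0) \<in> M'" unfolding M'_def using M0 by force
    next
      fix a t b s assume "(a,t) \<in> M'" "(b,s) \<in> M'"
      then obtain y1 t1 s1 y2 t2 s2 where h: "(y1,t1)\<in>M" "a = y1 + s1 *\<^sub>R x" "t = t1 + s1*c"
         "(y2,t2)\<in>M" "b = y2 + s2 *\<^sub>R x" "s = t2 + s2*c" unfolding M'_def by blast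
      have "(y1+y2, t1+t2) \<in> M" using Madd[OF h(1) h(4)] .
      moreover have "a + b = (y1+y2) + (s1+s2) *\<^sub>R x" "t + s = (t1+t2) + (s1+s2)*c"
        using h by (auto simp: algebra_simps)
      ultimately show "(a+b,t+s) \<in> M'" unfolding M'_def by blast
    next
      fix a t d assume "(a,t) \<in> M'"
      then obtain y1 t1 s1 where h: "(y1,t1)\<in>M" "a = y1 + s1 *\<^sub>R x" "t = t1 + s1*c"
        unfolding M'_def by auto
      have "(d *\<^sub>R y1, d*t1) \<in> M" using Msc[OF h(1)] .
      moreover have "d *\<^sub>R a = d *\<^sub>R y1 + (d * s1) *\<^sub>R x" "d*t = d*t1 + (d * s1)*c"
        using h by (auto simp: algebra_simps)
      ultimately show "(d *\<^sub>R a, d*t) \<in> M'" unfolding M'_def by blast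
    next
      fix a t assume "(a,t) \<in> M'"
      then obtain y t1 s where h: "(y,t1)\<in>M" "a = y + s *\<^sub>R x" "t = t1 + s*c"
        unfolding M'_def by auto
      show "t \<le> p a"
      proof (cases "s > 0")
        case True
        have "((1/s) *\<^sub>R y, (1/s)*t1) \<in> M" using Msc[OF h(1)] .
        from c2[OF this] have "s * c \<le> s * (p ((1/s) *\<^sub>R y + x) - (1/s)*t1)"
          using True by (simp add: mult_left_mono)
        also have "\<dots> = s * p ((1/s) *\<^sub>R y + x) - t1" using True by (simp add: algebra_simps)
        also have "\<dots> = p (s *\<^sub>R ((1/s) *\<^sub>R y + x)) - t1" by (simp only: homeq[OF True])
        also have "s *\<^sub>R ((1/s) *\<^sub>R y + x) = a" using h True by (simp add: algebra_simps)
        finally show ?thesis using h by linarith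
      next
        case False
        show ?thesis
        proof (cases "s = 0")
          case True then show ?thesis using h Mp by simp
        next
          case False
          with \<open>\<not> s > 0\<close> have sg: "-s > 0" by simp
          have "((1/(-s)) *\<^sub>R y, (1/(-s))*t1) \<in> M" using Msc[OF h(1)] .
          from c1[OF this] have "(-s) * ((1/(-s))*t1 - p ((1/(-s)) *\<^sub>R y - x)) \<le> (-s) * c"
            using sg by (simp add: mult_left_mono)
          moreover have "(-s) * ((1/(-s))*t1 - p ((1/(-s)) *\<^sub>R y - x)) = t1 - p ((-s) *\<^sub>R ((1/(-s)) *\<^sub>R y - x))"
            using homeq[OF sg, of "(1/(-s)) *\<^sub>R y - x"] sg by (simp add: algebra_simps)
          moreover have "(-s) *\<^sub>R ((1/(-s)) *\<^sub>R y - x) = a" using h sg by (simp add: algebra_simps)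
          ultimately show ?thesis using h by (simp add: algebra_simps)
        qed
      qed
    qed
    moreover have "M \<subseteq> M'"
    proof
      fix z assume "z \<in> M"
      then obtain y t where "z = (y,t)" "(y,t) \<in> M" by (cases z) auto
      then show "z \<in> M'" unfolding M'_def by force
    qed
    moreover have "(x, c) \<in> M'" unfolding M'_def using M0 by force
    ultimately show False using maxM nx by blast
  qed
  have uniq: "t = t'" if "(x,t)\<in>M" "(x,t')\<in>M" for x t t'
  proof -
    have "(x + (-1) *\<^sub>R x, t + (-1)*t') \<in> M" using Madd[OF that(1) Msc[OF that(2)]] .
    then have "(0, t - t') \<in> M" by simp
    from Mp[OF this] Mp[OF Msc[OF this, of "-1"]] show ?thesis using p0 by simp
  qed
  define F where "F x = (THE t. (x,t) \<in> M)" for x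
  have FM: "(x, F x) \<in> M" for x
    unfolding F_def using tot[of x] uniq by (metis theI)
  have "linear F"
  proof (rule linearI)
    fix a b show "F (a + b) = F a + F b" using uniq[OF FM Madd[OF FM FM]] .
  next
    fix c a show "F (c *\<^sub>R a) = c *\<^sub>R F a" using uniq[OF FM Msc[OF FM]] by simp
  qed
  moreover have "\<forall>x. F x \<le> p x" using FM Mp by blast
  ultimately show ?thesis by blast
qed



lemma weak_limit_in_closed_convex:
  fixes Q :: "'a::real_normed_vector set" and q :: "nat \<Rightarrow> 'a"
  assumes cl: "closed Q" and cv: "convex Q" and qQ: "\<And>n. q n \<in> Q"
    and wc: "weakly_converges q w"
  shows "w \<in> Q"
proof (rule ccontr)
  assume wQ: "w \<notin> Q"
  have Qne: "Q \<noteq> {}" using qQ by blast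
  define d where "d = infdist w Q"
  have "infdist w Q \<noteq> 0" using wQ in_closed_iff_infdist_zero[OF cl Qne] by simp
  then have dpos: "d > 0" using infdist_nonneg[of w Q] unfolding d_def by linarith
  have dz: "d \<le> norm (z - w)" if "z \<in> Q" for z
    using infdist_le[OF that, of w] unfolding d_def by (simp add: dist_norm norm_minus_commute)
  define S where "S y = {norm (y - s *\<^sub>R (z - w)) - s * d | s z. s \<ge> 0 \<and> z \<in> Q}" for y
  define p where "p y = Inf (S y)" for y
  have Sne: "S y \<noteq> {}" for y
  proof -
    have "norm y \<in> S y" unfolding S_def by (intro CollectI exI[of _ 0] exI[of _ "q 0"]) (simp add: qQ)
    then show ?thesis by auto
  qed
  have Slow: "- norm y \<le> v" if "v \<in> S y" for y v
  proof -
    from that obtain s z where h: "s \<ge> 0" "z \<in> Q" "v = norm (y - s *\<^sub>R (z - w)) - s * d"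
      unfolding S_def by blast
    have "s * d \<le> s * norm (z - w)" using dz[OF h(2)] h(1) by (simp add: mult_left_mono)
    also have "\<dots> = norm (s *\<^sub>R (z - w))" using h(1) by simp
    also have "\<dots> \<le> norm (y - s *\<^sub>R (z - w)) + norm y" using norm_triangle_ineq2[of "s *\<^sub>R (z - w)" y] norm_minus_commute[of y "s *\<^sub>R (z - w)"] by linarith
    finally show ?thesis using h(3) by linarith
  qed
  have Sbdd: "bdd_below (S y)" for y unfolding bdd_below_def using Slow by blast
  have pS: "p y \<le> v" if "v \<in> S y" for y v unfolding p_def by (rule cInf_lower[OF that Sbdd])
  have pG: "c \<le> p y" if "\<And>v. v \<in> S y \<Longrightarrow> c \<le> v" for c y unfolding p_def by (rule cInf_greatest[OF Sne that])
  have p_norm: "p y \<le> norm y" for y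
    by (rule pS) (unfold S_def, intro CollectI exI[of _ 0] exI[of _ "q 0"], simp add: qQ)
  have p_Q: "p (z - w) \<le> - d" if "z \<in> Q" for z
  proof -
    have "- d \<in> S (z - w)" unfolding S_def using that
      by (intro CollectI exI[of _ 1] exI[of _ z]) simp
    then show ?thesis by (rule pS)
  qed
  have sub: "p (x + y) \<le> p x + p y" for x y
  proof -
    have key: "p (x + y) \<le> a + b" if a: "a \<in> S x" and b: "b \<in> S y" for a b
    proof -
      from a obtain s1 z1 where h1: "s1 \<ge> 0" "z1 \<in> Q" "a = norm (x - s1 *\<^sub>R (z1 - w)) - s1 * d"
        unfolding S_def by blast
      from b obtain s2 z2 where h2: "s2 \<ge> 0" "z2 \<in> Q" "b = norm (y - s2 *\<^sub>R (z2 - w)) - s2 * d"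
        unfolding S_def by blast
      show ?thesis
      proof (cases "s1 + s2 = 0")
        case True
        then have "s1 = 0" "s2 = 0" using h1 h2 by auto
        then have "norm (x + y - 0 *\<^sub>R (z1 - w)) - 0 * d \<in> S (x+y)" unfolding S_def using h1 by (intro CollectI exI[of _ 0] exI[of _ z1]) simp
        from pS[OF this] have "p (x+y) \<le> norm (x + y)" by simp
        also have "\<dots> \<le> a + b" using h1 h2 \<open>s1 = 0\<close> \<open>s2 = 0\<close> by (simp add: norm_triangle_ineq)
        finally show ?thesis .
      next
        case False
        define s where "s = s1 + s2"
        have spos: "s > 0" using False h1 h2 unfolding s_def by auto
        define z where "z = (s1/s) *\<^sub>R z1 + (s2/s) *\<^sub>R z2"
        have zQ: "z \<in> Q" unfolding z_def
          by (rule convexD[OF cv h1(2) h2(2)]) (use h1 h2 spos in \<open>auto simp: s_def add_divide_distrib[symmetric]\<close>)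
        have sz0: "s *\<^sub>R z = s1 *\<^sub>R z1 + s2 *\<^sub>R z2"
          using spos unfolding z_def by (simp add: scaleR_add_right)
        have sz: "s *\<^sub>R (z - w) = s1 *\<^sub>R (z1 - w) + s2 *\<^sub>R (z2 - w)"
          using sz0 unfolding s_def by (simp add: algebra_simps)
        have "norm (x + y - s *\<^sub>R (z - w)) - s * d \<in> S (x+y)" unfolding S_def using zQ spos
          by (intro CollectI exI[of _ s] exI[of _ z]) simp
        from pS[OF this] have "p (x+y) \<le> norm (x + y - s *\<^sub>R (z - w)) - s * d" .
        also have "norm (x + y - s *\<^sub>R (z - w)) = norm ((x - s1 *\<^sub>R (z1 - w)) + (y - s2 *\<^sub>R (z2 - w)))"
          unfolding sz by (simp add: algebra_simps)
        also have "\<dots> \<le> norm (x - s1 *\<^sub>R (z1 - w)) + norm (y - s2 *\<^sub>R (z2 - w))" by (rule norm_triangle_ineq)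
        finally show ?thesis using h1 h2 unfolding s_def by (simp add: algebra_simps)
      qed
    qed
    have k2: "p (x + y) - b \<le> p x" if b: "b \<in> S y" for b
    proof (rule pG)
      fix v assume "v \<in> S x"
      from key[OF this b] show "p (x + y) - b \<le> v" by linarith
    qed
    have "p (x + y) - p x \<le> p y"
    proof (rule pG)
      fix v assume "v \<in> S y"
      from k2[OF this] show "p (x + y) - p x \<le> v" by linarith
    qed
    then show ?thesis by simp
  qed
  have hom: "p (c *\<^sub>R x) \<le> c * p x" if c: "c > 0" for c x
  proof -
    have "p (c *\<^sub>R x) / c \<le> v" if "v \<in> S x" for v
    proof -
      from that obtain s z where h: "s \<ge> 0" "z \<in> Q" "v = norm (x - s *\<^sub>R (z - w)) - s * d"
        unfolding S_def by blast
      have "norm (c *\<^sub>R x - (c * s) *\<^sub>R (z - w)) - (c * s) * d \<in> S (c *\<^sub>R x)"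
        unfolding S_def using h c by (intro CollectI exI[of _ "c * s"] exI[of _ z]) simp
      have e: "c *\<^sub>R x - (c * s) *\<^sub>R (z - w) = c *\<^sub>R (x - s *\<^sub>R (z - w))"
        by (simp add: scaleR_right_diff_distrib)
      have "norm (c *\<^sub>R x - (c * s) *\<^sub>R (z - w)) - (c * s) * d = c * v"
        unfolding e using h c by (simp add: right_diff_distrib)
      with pS[OF \<open>_ \<in> S (c *\<^sub>R x)\<close>] have "p (c *\<^sub>R x) \<le> c * v" by simp
      then show ?thesis using c by (simp add: divide_le_eq mult.commute)
    qed
    then have "p (c *\<^sub>R x) / c \<le> p x" by (rule pG)
    then show ?thesis using c by (simp add: divide_le_eq mult.commute)
  qed
  obtain F where lin: "linear F" and Fp: "\<And>x. F x \<le> p x" using HB_dominated[of p, OF sub hom] by blast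
  have Fadd: "F (x + y) = F x + F y" and Fsc: "F (c *\<^sub>R x) = c * F x" for x y c
    using lin by (simp_all add: linear_add linear_scale)
  have Fnorm: "norm (F x) \<le> norm x * 1" for x
  proof -
    have "F x \<le> norm x" using Fp[of x] p_norm[of x] by linarith
    moreover have "- F x \<le> norm x" using Fp[of "-x"] p_norm[of "-x"] Fsc[of "-1" x] by simp
    ultimately show ?thesis by simp
  qed
  have "bounded_linear F" by (rule bounded_linear_intro[OF Fadd _ Fnorm]) (simp add: Fsc)
  with wc have lim: "(\<lambda>n. F (q n)) \<longlonglongrightarrow> F w" unfolding weakly_converges_def by blast
  have diff: "F (q n) - F w \<le> - d" for n
  proof -
    have "F (q n - w) \<le> - d" using Fp[of "q n - w"] p_Q[OF qQ[of n]] by linarith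
    moreover have "F (q n - w) = F (q n) - F w" using Fadd[of "q n - w" w] by simp
    ultimately show ?thesis by simp
  qed
  from lim dpos have "eventually (\<lambda>n. dist (F (q n)) (F w) < d) sequentially" by (rule tendstoD)
  then obtain n where "dist (F (q n)) (F w) < d" by (meson eventually_sequentially order_refl)
  with diff[of n] show False by (simp add: dist_real_def)
qed



lemma small_le_zero:
  fixes a K r :: real
  assumes "r > 0" "K > 0" "\<And>e. 0 < e \<Longrightarrow> e < r \<Longrightarrow> a \<le> K * e"
  shows "a \<le> 0"
proof (rule ccontr)
  assume "\<not> a \<le> 0"
  then have a: "a > 0" by simp
  define e where "e = min (r/2) (a / (2*K))"
  have "0 < e" "e < r" using a assms(1,2) unfolding e_def by auto
  then have "a \<le> K * e" by (rule assms(3))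
  also have "\<dots> \<le> K * (a / (2*K))" using assms(2) unfolding e_def by (intro mult_left_mono) (auto simp del: times_divide_eq_right)
  also have "\<dots> = a / 2" using assms(2) by simp
  finally show False using a by simp
qed

lemma uc_midpoint:
  fixes R \<epsilon> :: real
  assumes uc: "uniformly_convex_space TYPE('a::real_normed_vector)" and R: "R > 0" and ep: "\<epsilon> > 0"
  shows "\<exists>\<eta>>0. \<eta> \<le> 1 \<and> (\<exists>c<R. \<forall>x y z :: 'a. \<epsilon> \<le> norm (x - y) \<longrightarrow> norm (z - x) \<le> R + \<eta>
           \<longrightarrow> norm (z - y) \<le> R + \<eta> \<longrightarrow> norm (z - (1/2) *\<^sub>R (x + y)) \<le> c)"
proof -
  have e0: "\<epsilon> / (R + 1) > 0" using R ep by simp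
  from uc e0 obtain \<delta> where dpos: "\<delta> > 0" and D: "\<And>x y::'a. norm x \<le> 1 \<Longrightarrow> norm y \<le> 1 \<Longrightarrow>
      norm (x - y) \<ge> \<epsilon> / (R + 1) \<Longrightarrow> norm ((1/2) *\<^sub>R (x + y)) \<le> 1 - \<delta>"
    using uc[unfolded uniformly_convex_space_def, rule_format, OF e0] by auto
  define \<eta> where "\<eta> = min 1 (R * \<delta> / 2)"
  have eta: "\<eta> > 0" "\<eta> \<le> 1" "\<eta> \<le> R * \<delta> / 2" using R dpos unfolding \<eta>_def by auto
  have "\<forall>x y z :: 'a. \<epsilon> \<le> norm (x - y) \<longrightarrow> norm (z - x) \<le> R + \<eta>
           \<longrightarrow> norm (z - y) \<le> R + \<eta> \<longrightarrow> norm (z - (1/2) *\<^sub>R (x + y)) \<le> R - R * \<delta> / 2"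
  proof (intro allI impI)
    fix x y z :: 'a
    assume h: "\<epsilon> \<le> norm (x - y)" "norm (z - x) \<le> R + \<eta>" "norm (z - y) \<le> R + \<eta>"
    define L where "L = R + \<eta>"
    have L: "L > 0" "L \<le> R + 1" using R eta unfolding L_def by auto
    define a where "a = (1/L) *\<^sub>R (z - x)"
    define b where "b = (1/L) *\<^sub>R (z - y)"
    have na: "norm a \<le> 1" using h(2) L unfolding a_def L_def by (simp add: divide_le_eq)
    have nb: "norm b \<le> 1" using h(3) L unfolding b_def L_def by (simp add: divide_le_eq)
    have "a - b = (1/L) *\<^sub>R (y - x)" unfolding a_def b_def by (simp add: algebra_simps)
    then have nab: "norm (a - b) = norm (x - y) / L" using L by (simp add: norm_minus_commute)
    have "\<epsilon> / (R + 1) \<le> \<epsilon> / L" using L ep by (intro divide_left_mono) auto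
    also have "\<dots> \<le> norm (x - y) / L" using h(1) L by (simp add: divide_right_mono)
    finally have "norm (a - b) \<ge> \<epsilon> / (R + 1)" using nab by simp
    from D[OF na nb this] have n1: "norm ((1/2) *\<^sub>R (a + b)) \<le> 1 - \<delta>" .
    have "(1/2) *\<^sub>R (a + b) = (1/L) *\<^sub>R ((1/2) *\<^sub>R ((z - x) + (z - y)))"
      unfolding a_def b_def scaleR_add_right scaleR_scaleR by (simp add: mult.commute)
    also have "(1/2) *\<^sub>R ((z - x) + (z - y)) = z - (1/2) *\<^sub>R (x + y)"
      by (simp add: algebra_simps scaleR_2[symmetric] del: scaleR_2)
    finally have mid: "(1/2) *\<^sub>R (a + b) = (1/L) *\<^sub>R (z - (1/2) *\<^sub>R (x + y))" .
    from n1[unfolded mid] have "norm (z - (1/2) *\<^sub>R (x + y)) / L \<le> 1 - \<delta>" using L by simp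
    then have "norm (z - (1/2) *\<^sub>R (x + y)) \<le> L * (1 - \<delta>)" using L by (simp add: divide_le_eq mult.commute)
    also have "L * (1 - \<delta>) = R - R * \<delta> + \<eta> * (1 - \<delta>)" unfolding L_def by (simp add: algebra_simps)
    also have "\<eta> * (1 - \<delta>) \<le> \<eta> * 1" using eta dpos by (intro mult_left_mono) auto
    finally show "norm (z - (1/2) *\<^sub>R (x + y)) \<le> R - R * \<delta> / 2" using eta by linarith
  qed
  moreover have "R - R * \<delta> / 2 < R" using R dpos by simp
  ultimately show ?thesis using eta by blast
qed

lemma tri: "norm (x - z) \<le> norm (x - y) + norm (y - (z::'a::real_normed_vector))"
  by (rule norm_diff_triangle_le) auto

lemma funpow_Q:
  assumes "T ` Q \<subseteq> Q" "x \<in> Q" shows "(T ^^ m) x \<in> Q"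
  using assms by (induction m) auto

theorem mainTheorem4:
  fixes Q :: "'a::banach set" and T :: "'a \<Rightarrow> 'a"
    and r :: real and \<beta> :: "nat \<Rightarrow> real"
    and q :: "nat \<Rightarrow> 'a" and w :: 'a
  assumes "uniformly_convex_space TYPE('a)"
    and "opial_condition TYPE('a)"
    and "closed Q" and "convex Q" and "bounded Q"
    and "r > 0"
    and "\<And>n. \<beta> n > 0"
    and "\<beta> \<longlonglongrightarrow> 1"
    and "T ` Q \<subseteq> Q"
    and "\<And>p p' n. p \<in> Q \<Longrightarrow> p' \<in> Q \<Longrightarrow> norm (p - p') < r \<Longrightarrow> n \<ge> 1 \<Longrightarrow>
           norm ((T ^^ n) p - (T ^^ n) p') \<le> \<beta> n * norm (p - p')"
    and "\<And>n. q n \<in> Q"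
    and "weakly_converges q w"
    and "(\<lambda>n. q n - T (q n)) \<longlonglongrightarrow> 0"
    and "asymptotic_radius q Q < ereal r"
  shows "T w = w"
proof -
  note uc = assms(1) and op = assms(2) and rpos = assms(6) and bpos = assms(7) and blim = assms(8)
    and TQ = assms(9) and Lip = assms(10) and qQ = assms(11) and wc = assms(12) and qT = assms(13)
    and rad = assms(14)
  have wQ: "w \<in> Q" by (rule weak_limit_in_closed_convex[OF assms(3) assms(4) qQ wc])
  define f where "f y = limsup (\<lambda>n. ereal (norm (q n - y)))" for y
  have fmin: "f w \<le> f y" for y
  proof (cases "y = w")
    case False
    then show ?thesis using op wc unfolding opial_condition_def f_def by blast
  qed simp
  have "f w \<le> asymptotic_radius q Q" unfolding asymptotic_radius_def f_def[symmetric]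
    by (rule INF_greatest) (rule fmin)
  with rad have fr: "f w < ereal r" by simp
  have f0: "0 \<le> f w" unfolding f_def by (rule le_Limsup) auto
  obtain R where fR: "f w = ereal R" using fr f0 by (cases "f w") auto
  have R0: "R \<ge> 0" and Rr: "R < r" using fR f0 fr by auto
  have evR: "eventually (\<lambda>n. norm (q n - w) < R + e) sequentially" if "e > 0" for e
  proof -
    have "limsup (\<lambda>n. ereal (norm (q n - w))) < ereal (R + e)" using fR that unfolding f_def by simp
    from Limsup_lessD[OF this] show ?thesis by simp
  qed
  have fle: "f y \<le> ereal c" if "eventually (\<lambda>n. norm (q n - y) \<le> c) sequentially" for y c
    unfolding f_def by (rule Limsup_bounded) (use that in \<open>auto elim: eventually_mono\<close>)
  have TmQ: "(T ^^ m) x \<in> Q" if "x \<in> Q" for m x using funpow_Q[OF TQ that] .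
  have Tm0: "(\<lambda>n. norm (q n - (T ^^ m) (q n))) \<longlonglongrightarrow> 0" for m
  proof (induction m)
    case 0 then show ?case by simp
  next
    case (Suc m)
    have d0: "(\<lambda>n. norm (q n - T (q n))) \<longlonglongrightarrow> 0" using tendsto_norm_zero[OF qT] .
    have ev: "eventually (\<lambda>n. norm (q n - T (q n)) < r) sequentially"
      using d0 rpos by (auto dest: order_tendstoD(2))
    have up: "eventually (\<lambda>n. norm (q n - (T ^^ Suc m) (q n)) \<le>
        norm (q n - (T ^^ m) (q n)) + (1 + \<beta> m) * norm (q n - T (q n))) sequentially"
      using ev
    proof (rule eventually_mono)
      fix n assume lt: "norm (q n - T (q n)) < r"
      have s: "(T ^^ Suc m) (q n) = (T ^^ m) (T (q n))" by (simp only: funpow_Suc_right comp_def)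
      have b2: "norm ((T ^^ m) (q n) - (T ^^ m) (T (q n))) \<le> (1 + \<beta> m) * norm (q n - T (q n))"
      proof (cases "m = 0")
        case True then show ?thesis using bpos[of 0] by (simp add: algebra_simps)
      next
        case False
        have "norm ((T ^^ m) (q n) - (T ^^ m) (T (q n))) \<le> \<beta> m * norm (q n - T (q n))"
          using Lip[OF qQ[of n] _ lt] TQ qQ[of n] False by auto
        also have "\<dots> \<le> (1 + \<beta> m) * norm (q n - T (q n))" by (simp add: algebra_simps)
        finally show ?thesis .
      qed
      have "norm (q n - (T ^^ Suc m) (q n)) \<le> norm (q n - (T ^^ m) (q n)) + norm ((T ^^ m) (q n) - (T ^^ m) (T (q n)))"
        unfolding s by (rule tri)
      with b2 show "norm (q n - (T ^^ Suc m) (q n)) \<le> norm (q n - (T ^^ m) (q n)) + (1 + \<beta> m) * norm (q n - T (q n))"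
        by linarith
    qed
    have "(\<lambda>n. norm (q n - (T ^^ m) (q n)) + (1 + \<beta> m) * norm (q n - T (q n))) \<longlonglongrightarrow> 0 + (1 + \<beta> m) * 0"
      by (intro tendsto_intros Suc.IH d0)
    then have lim2: "(\<lambda>n. norm (q n - (T ^^ m) (q n)) + (1 + \<beta> m) * norm (q n - T (q n))) \<longlonglongrightarrow> 0" by simp
    show ?case by (rule tendsto_sandwich[OF _ up tendsto_const lim2]) auto
  qed
  have estC: "eventually (\<lambda>n. norm (q n - (T ^^ m) w) \<le> e + \<beta> m * (R + e)) sequentially"
    if m: "m \<ge> 1" and e: "e > 0" "R + e < r" for m e
  proof -
    have e1: "eventually (\<lambda>n. norm (q n - (T ^^ m) (q n)) < e) sequentially"
      using Tm0[of m] e by (auto dest: order_tendstoD(2))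
    show ?thesis using eventually_conj[OF e1 evR[OF e(1)]]
    proof (rule eventually_mono)
      fix n assume h: "norm (q n - (T ^^ m) (q n)) < e \<and> norm (q n - w) < R + e"
      have "norm ((T ^^ m) (q n) - (T ^^ m) w) \<le> \<beta> m * norm (q n - w)"
        using Lip[OF qQ[of n] wQ _ m] h e by auto
      also have "\<dots> \<le> \<beta> m * (R + e)" using h bpos[of m] by (intro mult_left_mono) auto
      finally have "norm ((T ^^ m) (q n) - (T ^^ m) w) \<le> \<beta> m * (R + e)" .
      moreover have "norm (q n - (T ^^ m) w) \<le> norm (q n - (T ^^ m) (q n)) + norm ((T ^^ m) (q n) - (T ^^ m) w)"
        by (rule tri)
      ultimately show "norm (q n - (T ^^ m) w) \<le> e + \<beta> m * (R + e)" using h by linarith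
    qed
  qed
  show ?thesis
  proof (cases "R = 0")
    case True
    have "norm (T w - w) \<le> 0"
    proof (rule small_le_zero[OF rpos, of "2 + \<beta> 1"])
      show "2 + \<beta> 1 > 0" using bpos[of 1] by simp
    next
      fix e assume e: "0 < e" "e < r"
      have a: "eventually (\<lambda>n. norm (q n - (T ^^ 1) w) \<le> e + \<beta> 1 * (R + e)) sequentially"
        using estC[of 1 e] e True by simp
      obtain n where n1: "norm (q n - (T ^^ 1) w) \<le> e + \<beta> 1 * (R + e)" and n2: "norm (q n - w) < R + e"
        using eventually_happens'[OF _ eventually_conj[OF a evR[OF e(1)]]] by auto
      have "norm (T w - w) \<le> norm (q n - T w) + norm (q n - w)"
        using tri[of "T w" w "q n"] norm_minus_commute[of "T w" "q n"] by linarith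
      then show "norm (T w - w) \<le> (2 + \<beta> 1) * e" using n1 n2 True by (simp add: algebra_simps)
    qed
    then show ?thesis by simp
  next
    case False
    with R0 have Rpos: "R > 0" by simp
    have conv: "eventually (\<lambda>m. norm ((T ^^ m) w - w) < \<epsilon>) sequentially" if ep: "\<epsilon> > 0" for \<epsilon>
    proof -
      obtain \<eta> c where eta: "\<eta> > 0" "\<eta> \<le> 1" and cR: "c < R" and UCm: "\<And>x y z :: 'a. \<epsilon> \<le> norm (x - y) \<Longrightarrow>
          norm (z - x) \<le> R + \<eta> \<Longrightarrow> norm (z - y) \<le> R + \<eta> \<Longrightarrow> norm (z - (1/2) *\<^sub>R (x + y)) \<le> c"
        using uc_midpoint[OF uc Rpos ep] by blast
      define e where "e = min (\<eta>/4) ((r - R)/2)"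
      have e: "e > 0" "R + e < r" "e \<le> \<eta>/4" using eta Rr unfolding e_def by (auto simp: min_def field_simps)
      have "eventually (\<lambda>m. dist (\<beta> m) 1 < \<eta> / (4 * (R + 1))) sequentially"
        using blim eta Rpos by (intro tendstoD) auto
      moreover have "eventually (\<lambda>m. m \<ge> 1) sequentially" by (rule eventually_ge_at_top)
      ultimately show ?thesis
      proof (rule eventually_elim2)
        fix m assume bm: "dist (\<beta> m) 1 < \<eta> / (4 * (R + 1))" and m: "m \<ge> 1"
        show "norm ((T ^^ m) w - w) < \<epsilon>"
        proof (rule ccontr)
          assume "\<not> norm ((T ^^ m) w - w) < \<epsilon>"
          then have far: "\<epsilon> \<le> norm (w - (T ^^ m) w)" by (simp add: norm_minus_commute)
          have bnd: "e + \<beta> m * (R + e) \<le> R + \<eta>"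
          proof -
            have "\<beta> m \<le> 1 + \<eta> / (4 * (R + 1))" using bm by (simp add: dist_real_def abs_less_iff)
            then have "\<beta> m * (R + e) \<le> (1 + \<eta> / (4 * (R + 1))) * (R + e)"
              using e Rpos by (intro mult_right_mono) auto
            also have "\<dots> = (R + e) + \<eta> / 4 * ((R + e) / (R + 1))" using Rpos by (simp add: field_simps)
            also have "\<dots> \<le> (R + e) + \<eta> / 4 * 1"
              using e eta Rpos by (intro add_left_mono mult_left_mono) auto
            finally show ?thesis using e by linarith
          qed
          have ev1: "eventually (\<lambda>n. norm (q n - (T ^^ m) w) \<le> R + \<eta>) sequentially"
            using estC[OF m e(1) e(2)] bnd by (auto elim: eventually_mono)
          have ev2: "eventually (\<lambda>n. norm (q n - w) \<le> R + \<eta>) sequentially"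
            using evR[OF eta(1)] by (auto elim: eventually_mono)
          have "eventually (\<lambda>n. norm (q n - (1/2) *\<^sub>R (w + (T ^^ m) w)) \<le> c) sequentially"
            using eventually_conj[OF ev2 ev1] by (rule eventually_mono) (use UCm far in blast)
          from fle[OF this] have "f ((1/2) *\<^sub>R (w + (T ^^ m) w)) \<le> ereal c" .
          moreover have "f w \<le> f ((1/2) *\<^sub>R (w + (T ^^ m) w))" by (rule fmin)
          ultimately have "ereal R \<le> ereal c" using fR by (metis order_trans)
          then show False using cR by simp
        qed
      qed
    qed
    have "norm (T w - w) \<le> 0"
    proof (rule small_le_zero[OF rpos, of "1 + \<beta> 1"])
      show "1 + \<beta> 1 > 0" using bpos[of 1] by simp
    next
      fix \<epsilon> assume ep: "0 < \<epsilon>" "\<epsilon> < r"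
      from conv[OF ep(1)] obtain N where N: "\<And>m. m \<ge> N \<Longrightarrow> norm ((T ^^ m) w - w) < \<epsilon>"
        unfolding eventually_sequentially by blast
      have a1: "norm ((T ^^ N) w - w) < \<epsilon>" and a2: "norm ((T ^^ Suc N) w - w) < \<epsilon>" using N[of N] N[of "Suc N"] by auto
      have "norm (T w - T ((T ^^ N) w)) \<le> \<beta> 1 * norm (w - (T ^^ N) w)"
        using Lip[OF wQ TmQ[OF wQ, of N], of 1] a1 ep by (simp add: norm_minus_commute)
      also have "\<dots> \<le> \<beta> 1 * \<epsilon>" using a1 bpos[of 1] by (intro mult_left_mono) (auto simp: norm_minus_commute)
      finally have b1: "norm (T w - T ((T ^^ N) w)) \<le> \<beta> 1 * \<epsilon>" .
      have "norm (T w - w) \<le> norm (T w - T ((T ^^ N) w)) + norm (T ((T ^^ N) w) - w)"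
        by (rule tri)
      then show "norm (T w - w) \<le> (1 + \<beta> 1) * \<epsilon>" using b1 a2 by (simp add: algebra_simps)
    qed
    then show ?thesis by simp
  qed
qed

end
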